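(* Let $r_1,r_2:\mathcal{X}\times\mathcal{Y}\to\mathbb{R}$ satisfy $\|r_1\|_\infty\le C$ and $\|r_2\|_\infty\le C$. For $x\in\mathcal{X}$ and $y_1,y_2\in\mathcal{Y}$ let $\delta_x(r_1,r_2,y_1,y_2)=r_1(x,y_1)-r_1(x,y_2)-(r_2(x,y_1)-r_2(x,y_2))$. Then $$\delta_x(r_1,r_2,y_1,y_2)^2\le 2(3+\exp(2C))^2\,D_{\mathrm H}^2\big(\mathbb{P}_{r_1}(\cdot|x,y_1,y_2)\,\|\,\mathbb{P}_{r_2}(\cdot|x,y_1,y_2)\big).$$
   Context: For a reward $r$, $\mathbb{P}_r(\cdot|x,y_1,y_2)$ is the Bernoulli distribution of the outcome of comparing $(x,y_1)$ and $(x,y_2)$ under the Bradley–Terry model, with $\mathbb{P}_r(y_1\succ y_2|x)=\sigma(r(x,y_1)-r(x,y_2))$ and $\sigma$ the logistic function. The squared Hellinger distance between distributions $P,Q$ on a finite set is $D_{\mathrm H}^2(P\|Q)=\frac12\sum_\omega(\sqrt{P(\omega)}-\sqrt{Q(\omega)})^2$. *)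

theory Defs
  imports "HOL-Analysis.Analysis"
begin

definition logistic :: "real \<Rightarrow> real" where
  "logistic t = 1 / (1 + exp (- t))"

text \<open>Bradley-Terry comparison outcome distribution on the two-point outcome space bool:
  True means y1 is preferred to y2, False means y2 is preferred to y1.\<close>
definition BT_prob :: "('x \<Rightarrow> 'y \<Rightarrow> real) \<Rightarrow> 'x \<Rightarrow> 'y \<Rightarrow> 'y \<Rightarrow> bool \<Rightarrow> real" where
  "BT_prob r x y1 y2 b =
     (if b then logistic (r x y1 - r x y2) else 1 - logistic (r x y1 - r x y2))"

definition hellinger_sq :: "('a::finite \<Rightarrow> real) \<Rightarrow> ('a \<Rightarrow> real) \<Rightarrow> real" where
  "hellinger_sq P Q = (1/2) * (\<Sum>\<omega>\<in>UNIV. (sqrt (P \<omega>) - sqrt (Q \<omega>))^2)"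

definition delta_BT :: "('x \<Rightarrow> 'y \<Rightarrow> real) \<Rightarrow> ('x \<Rightarrow> 'y \<Rightarrow> real) \<Rightarrow> 'x \<Rightarrow> 'y \<Rightarrow> 'y \<Rightarrow> real" where
  "delta_BT r1 r2 x y1 y2 = r1 x y1 - r1 x y2 - (r2 x y1 - r2 x y2)"

end

theory Submission
  imports Defs
begin

lemma logistic_deriv:
  "(logistic has_real_derivative (exp (-t) / (1 + exp (-t))^2)) (at t)"
  unfolding logistic_def[abs_def]
  apply (auto intro!: derivative_eq_intros simp: power2_eq_square)
  by (smt (verit) exp_gt_zero)

lemma logistic_pos: "0 < logistic t" "logistic t < 1"
  unfolding logistic_def by (auto simp: add_pos_pos)

lemma hell_aux:
  fixes p q :: real
  assumes "0 < p" "p < 1" "0 < q" "q < 1"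
  shows "(p - q)^2 \<le> (sqrt p - sqrt q)^2 + (sqrt (1-p) - sqrt (1-q))^2"
proof -
  define s t s' t' where "s = sqrt p" "t = sqrt q" "s' = sqrt (1-p)" "t' = sqrt (1-q)"
  have ss: "s^2 = p" "t^2 = q" "s'^2 = 1-p" "t'^2 = 1-q" using assms by (auto simp: s_t_s'_t'_def)
  have pos: "s > 0" "t > 0" "s' > 0" "t' > 0" using assms by (auto simp: s_t_s'_t'_def)
  define uu ww where "uu = s + t" "ww = s' + t'"
  have uv: "uu > 0" "ww > 0" using pos by (auto simp: uu_ww_def)
  have e1: "p - q = (s - t) * uu" using ss by (simp add: uu_ww_def power2_eq_square algebra_simps)
  have e2: "p - q = (t' - s') * ww" using ss by (simp add: uu_ww_def power2_eq_square algebra_simps)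
  have amgm: "2*(a*b) \<le> a^2 + b^2" for a b :: real
    using zero_le_power2[of "a-b"] unfolding power2_diff by linarith
  have "uu^2 + ww^2 \<le> 4"
  proof -
    have "uu^2 = s^2 + t^2 + 2*(s*t)" by (simp add: uu_ww_def power2_sum)
    moreover have "ww^2 = s'^2 + t'^2 + 2*(s'*t')" by (simp add: uu_ww_def power2_sum)
    ultimately show ?thesis using amgm[of s t] amgm[of s' t'] ss by linarith
  qed
  hence uvle: "uu * ww \<le> 2" using amgm[of uu ww] by linarith
  have key: "uu^2 * ww^2 \<le> uu^2 + ww^2"
  proof -
    have "uu^2*ww^2 = (uu * ww)*(uu * ww)" by (simp add: power2_eq_square)
    also have "\<dots> \<le> 2*(uu * ww)" using uvle uv by (intro mult_right_mono) auto
    also have "\<dots> \<le> uu^2+ww^2" using amgm[of uu ww] by linarith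
    finally show ?thesis .
  qed
  define D where "D = (p-q)^2"
  have X: "(s - t)^2 = D / uu^2" using uv unfolding D_def e1 by (simp add: power_mult_distrib)
  have Y: "(s' - t')^2 = D / ww^2" using uv unfolding D_def e2 by (simp add: power_mult_distrib power2_commute)
  have "D \<le> D / uu^2 + D / ww^2"
  proof -
    have "D * (uu^2*ww^2) \<le> D * (uu^2 + ww^2)" using key by (intro mult_left_mono) (auto simp: D_def)
    thus ?thesis using uv by (simp add: field_simps)
  qed
  thus ?thesis using X Y by (simp add: D_def s_t_s'_t'_def)
qed

lemma lip:
  fixes a b C :: real
  assumes "\<bar>a\<bar> \<le> 2*C" "\<bar>b\<bar> \<le> 2*C"
  shows "\<bar>a - b\<bar> \<le> (3 + exp (2*C)) * \<bar>logistic a - logistic b\<bar>"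
proof -
  have gen: "y - x \<le> (3 + exp (2*C)) * (logistic y - logistic x)"
    if "x < y" "\<bar>x\<bar> \<le> 2*C" "\<bar>y\<bar> \<le> 2*C" for x y
  proof -
    obtain z where z: "x < z" "z < y" "logistic y - logistic x = (y - x) * (exp (-z) / (1 + exp (-z))^2)"
      using MVT2[OF \<open>x<y\<close>, of logistic "\<lambda>t. exp (-t) / (1 + exp (-t))^2"] logistic_deriv by blast
    have zb: "\<bar>z\<bar> \<le> 2*C" using z that by auto
    have "exp z + exp (-z) \<le> exp (2*C) + 1"
    proof (cases "z \<ge> 0")
      case True
      then show ?thesis using zb by (smt (verit) exp_le_cancel_iff exp_zero)
    next
      case False
      then show ?thesis using zb by (smt (verit) exp_le_cancel_iff exp_zero)
    qed
    moreover have "(1 + exp (-z))^2 / exp (-z) = exp z + 2 + exp (-z)"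
      by (simp add: power2_eq_square field_simps exp_minus)
    ultimately have bnd: "(1 + exp (-z))^2 / exp (-z) \<le> 3 + exp (2*C)" by linarith
    have "y - x = (logistic y - logistic x) * ((1 + exp (-z))^2 / exp (-z))"
    proof -
      have "(1 + exp (-z))^2 > 0" "exp (-z) > 0" by (smt (verit) exp_gt_zero zero_less_power)+
      moreover have "1 + exp (-z) \<noteq> 0" by (smt (verit) exp_gt_zero)
      ultimately show ?thesis unfolding z(3) by simp
    qed
    also have "\<dots> \<le> (logistic y - logistic x) * (3 + exp (2*C))"
      using bnd z(3) \<open>x<y\<close> by (intro mult_left_mono) (auto intro!: mult_nonneg_nonneg)
    finally show ?thesis by (simp add: mult.commute)
  qed
  consider "a < b" | "a = b" | "b < a" by linarith
  thus ?thesis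
  proof cases
    case 1
    have g: "b - a \<le> (3 + exp (2*C)) * (logistic b - logistic a)" using gen[of a b] 1 assms by blast
    have "(3 + exp (2*C)) * (logistic b - logistic a) \<le> (3 + exp (2*C)) * \<bar>logistic a - logistic b\<bar>"
      by (intro mult_left_mono) (auto simp: add_nonneg_nonneg less_imp_le)
    thus ?thesis using g 1 by linarith
  next
    case 3
    have g: "a - b \<le> (3 + exp (2*C)) * (logistic a - logistic b)" using gen[of b a] 3 assms by blast
    have "(3 + exp (2*C)) * (logistic a - logistic b) \<le> (3 + exp (2*C)) * \<bar>logistic a - logistic b\<bar>"
      by (intro mult_left_mono) (auto simp: add_nonneg_nonneg less_imp_le)
    thus ?thesis using g 3 by linarith
  qed auto
qed

theorem lemma4:
  fixes r1 r2 :: "'x \<Rightarrow> 'y \<Rightarrow> real" and C :: real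
    and x :: 'x and y1 y2 :: 'y
  assumes "\<forall>a b. \<bar>r1 a b\<bar> \<le> C"
    and "\<forall>a b. \<bar>r2 a b\<bar> \<le> C"
  shows "(delta_BT r1 r2 x y1 y2)^2
    \<le> 2 * (3 + exp (2 * C))^2 * hellinger_sq (BT_prob r1 x y1 y2) (BT_prob r2 x y1 y2)"
proof -
  define a where "a = r1 x y1 - r1 x y2"
  define b where "b = r2 x y1 - r2 x y2"
  define p where "p = logistic a"
  define q where "q = logistic b"
  have h: "\<bar>r1 x y1\<bar> \<le> C" "\<bar>r1 x y2\<bar> \<le> C" "\<bar>r2 x y1\<bar> \<le> C" "\<bar>r2 x y2\<bar> \<le> C"
    using assms by auto
  have ab: "\<bar>a\<bar> \<le> 2*C" "\<bar>b\<bar> \<le> 2*C" using h unfolding a_def b_def by linarith+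
  have UB: "(UNIV :: bool set) = {True, False}" by auto
  have H: "2 * hellinger_sq (BT_prob r1 x y1 y2) (BT_prob r2 x y1 y2)
     = (sqrt p - sqrt q)^2 + (sqrt (1-p) - sqrt (1-q))^2"
    unfolding hellinger_sq_def BT_prob_def UB by (simp add: a_def b_def p_def q_def)
  have hp: "(p - q)^2 \<le> (sqrt p - sqrt q)^2 + (sqrt (1-p) - sqrt (1-q))^2"
    unfolding p_def q_def by (intro hell_aux) (auto simp: logistic_pos)
  have L: "\<bar>a - b\<bar> \<le> (3 + exp (2*C)) * \<bar>p - q\<bar>" using lip[OF ab] by (simp add: p_def q_def)
  have "(delta_BT r1 r2 x y1 y2)^2 = \<bar>a - b\<bar>^2" by (simp add: delta_BT_def a_def b_def)
  also have "\<dots> \<le> ((3 + exp (2*C)) * \<bar>p - q\<bar>)^2" using L by (intro power_mono) auto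
  also have "\<dots> = (3 + exp (2*C))^2 * (p - q)^2" by (simp add: power_mult_distrib)
  also have "\<dots> \<le> (3 + exp (2*C))^2 * (2 * hellinger_sq (BT_prob r1 x y1 y2) (BT_prob r2 x y1 y2))"
    using hp H by (intro mult_left_mono) auto
  finally show ?thesis by simp
qed

end
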